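(* For $a\in\mathbb{C}$ and $n\in\mathbb{Z}_+$, the level $n$ Zhu algebra $A_n(M_a(1))$ of the rank one Heisenberg vertex operator algebra $M_a(1)$ is generated by the elements \[ \alpha(-2n)^{i_{2n}}\alpha(-2n+1)^{i_{2n-1}}\cdots\alpha(-1)^{i_1}\mathbf{1}+O_n(M_a(1))\quad\text{and}\quad \alpha(-1)^j\mathbf{1}+O_n(M_a(1)), \] where $i_1,\dots,i_{2n}\in\mathbb{N}$ with $0\le i_1\le n$, and $j\in\mathbb{Z}_+$.
   Context: Let $\mathfrak{h}=\mathbb{C}\alpha$ with $\langle\alpha,\alpha\rangle=1$, and $\hat{\mathfrak{h}}=\mathfrak{h}\otimes\mathbb{C}[t,t^{-1}]\oplus\mathbb{C}\mathbf{k}$ with $[\alpha(m),\alpha(p)]=m\delta_{m+p,0}\mathbf{k}$, $\mathbf{k}$ central, $\alpha(m)=\alpha\otimes t^m$. $M(1)=U(\hat{\mathfrak{h}})\otimes_{U(\mathfrak{h}\otimes\mathbb{C}[t]\oplus\mathbb{C}\mathbf{k})}\mathbb{C}\mathbf{1}$ where $\mathfrak{h}\otimes\mathbb{C}[t]$ acts trivially and $\mathbf{k}$ as $1$; it is a vertex operator algebra with $Y(\alpha(-1)\mathbf{1},x)=\sum_m\alpha(m)x^{-m-1}$, spanned by $\alpha(-k_1)\cdots\alpha(-k_j)\mathbf{1}$. $M_a(1)$ is this vertex algebra with conformal vector $\omega_a=\frac12\alpha(-1)^2\mathbf{1}+a\alpha(-2)\mathbf{1}$ (central charge $1-12a^2$);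 $\alpha(-1)\mathbf{1}$ has weight $1$. For a vertex operator algebra $V$, $n\in\mathbb{N}$, homogeneous $u$: $u\circ_nv=\mathrm{Res}_x(1+x)^{\mathrm{wt}\,u+n}Y(u,x)v\,x^{-2n-2}$, $O_n(V)=\{(L(-1)+L(0))v\}+\mathrm{span}\{u\circ_nv\}$, $A_n(V)=V/O_n(V)$ with product $u*_nv=\sum_{m=0}^n(-1)^m\binom{m+n}{n}\mathrm{Res}_x(1+x)^{\mathrm{wt}\,u+n}Y(u,x)v\,x^{-n-m-1}$. *)

theory Defs
  imports Complex_Main "HOL-Library.Multiset"
begin

text \<open>
  A basis vector alpha(-k_1)...alpha(-k_j)1 (all k_i >= 1) is encoded by the
  multiset {#k_1,...,k_j#} of positive naturals.  A vector of M(1) is a finitely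
  supported complex-valued function on such multisets.
\<close>

type_synonym vec = "nat multiset \<Rightarrow> complex"

definition vzero :: vec where "vzero = (\<lambda>_. 0)"
definition vadd :: "vec \<Rightarrow> vec \<Rightarrow> vec" where "vadd u v = (\<lambda>N. u N + v N)"
definition vscale :: "complex \<Rightarrow> vec \<Rightarrow> vec" where "vscale c v = (\<lambda>N. c * v N)"
definition vsupp :: "vec \<Rightarrow> nat multiset set" where "vsupp v = {M. v M \<noteq> 0}"

definition Mspace :: "vec set" where
  "Mspace = {v. finite (vsupp v) \<and> (\<forall>M\<in>vsupp v. 0 \<notin># M)}"

definition bvec :: "nat multiset \<Rightarrow> vec" where
  "bvec M = (\<lambda>N. if N = M then 1 else 0)"

definition lin_ext :: "(nat multiset \<Rightarrow> vec) \<Rightarrow> vec \<Rightarrow> vec" where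
  "lin_ext f v = (\<lambda>N. \<Sum>M\<in>vsupp v. v M * f M N)"

text \<open>The Heisenberg modes alpha(m): creation for m < 0, zero for m = 0,
  and alpha(m) alpha(-m)^c = m c alpha(-m)^(c-1) for m > 0.\<close>
definition alpha :: "int \<Rightarrow> vec \<Rightarrow> vec" where
  "alpha m = lin_ext (\<lambda>M.
     if m < 0 then bvec (add_mset (nat (- m)) M)
     else if m = 0 then vzero
     else vscale (of_int m * of_nat (count M (nat m))) (bvec (M - {#nat m#})))"

definition normal_prod :: "int list \<Rightarrow> vec \<Rightarrow> vec" where
  "normal_prod ms = foldr (\<lambda>m f. alpha m \<circ> f)
      (filter (\<lambda>m. m < 0) ms @ filter (\<lambda>m. 0 \<le> m) ms) id"

text \<open>Coefficient: d^(k-1)/(k-1)! alpha(x) = sum_m binom(-m-1,k-1) alpha(m) x^(-m-k).\<close>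
definition mode_coef :: "nat list \<Rightarrow> int list \<Rightarrow> complex" where
  "mode_coef ks ms = (\<Prod>r<length ks. (of_int (- (ms ! r) - 1) :: complex) gchoose (ks ! r - 1))"

text \<open>Y(alpha(-k_1)...alpha(-k_j)1, x) = :d^(k_1-1)alpha(x)/(k_1-1)! ... d^(k_j-1)alpha(x)/(k_j-1)!:,
  and u_(p) is the coefficient of x^(-p-1).  Applied to a basis vector, only finitely many
  terms are nonzero; we sum exactly over those.\<close>
definition Ymode_basis :: "nat multiset \<Rightarrow> int \<Rightarrow> nat multiset \<Rightarrow> vec" where
  "Ymode_basis M p N =
     (let ks = sorted_list_of_multiset M;
          T = (\<lambda>ms. vscale (mode_coef ks ms) (normal_prod ms (bvec N)))
      in (\<lambda>L. \<Sum>ms\<in>{ms. length ms = length ks \<and> sum_list ms + int (sum_list ks) = p + 1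
                          \<and> T ms \<noteq> vzero}. T ms L))"

definition Ymode :: "vec \<Rightarrow> int \<Rightarrow> vec \<Rightarrow> vec" where
  "Ymode u p v = (\<lambda>L. \<Sum>M\<in>vsupp u. u M * lin_ext (Ymode_basis M p) v L)"

definition omega :: "complex \<Rightarrow> vec" where
  "omega a = vadd (vscale (1/2) (bvec {#1, 1#})) (vscale a (bvec {#2#}))"

definition Lop :: "complex \<Rightarrow> int \<Rightarrow> vec \<Rightarrow> vec" where
  "Lop a m v = Ymode (omega a) (m + 1) v"

definition homog :: "nat \<Rightarrow> vec \<Rightarrow> bool" where
  "homog d u \<longleftrightarrow> u \<in> Mspace \<and> (\<forall>M\<in>vsupp u. sum_mset M = d)"

definition wproj :: "nat \<Rightarrow> vec \<Rightarrow> vec" where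
  "wproj d u = (\<lambda>M. if sum_mset M = d then u M else 0)"

text \<open>u o_n v = Res_x (1+x)^(wt u + n) Y(u,x) v x^(-2n-2), for u homogeneous of weight d.\<close>
definition circ_n :: "nat \<Rightarrow> nat \<Rightarrow> vec \<Rightarrow> vec \<Rightarrow> vec" where
  "circ_n n d u v = (\<lambda>L. \<Sum>i\<le>d + n. of_nat ((d + n) choose i) *
       Ymode u (int i - 2 * int n - 2) v L)"

definition star_hom :: "nat \<Rightarrow> nat \<Rightarrow> vec \<Rightarrow> vec \<Rightarrow> vec" where
  "star_hom n d u v = (\<lambda>L. \<Sum>m\<le>n. (-1) ^ m * of_nat ((m + n) choose n) *
       (\<Sum>i\<le>d + n. of_nat ((d + n) choose i) *
          Ymode u (int i - int n - int m - 1) v L))"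

definition star_n :: "nat \<Rightarrow> vec \<Rightarrow> vec \<Rightarrow> vec" where
  "star_n n u v = (\<lambda>L. \<Sum>d\<in>sum_mset ` vsupp u. star_hom n d (wproj d u) v L)"

inductive_set On_set :: "complex \<Rightarrow> nat \<Rightarrow> vec set" for a n where
  On_zero: "vzero \<in> On_set a n"
| On_L: "v \<in> Mspace \<Longrightarrow> vadd (Lop a (-1) v) (Lop a 0 v) \<in> On_set a n"
| On_circ: "homog d u \<Longrightarrow> v \<in> Mspace \<Longrightarrow> circ_n n d u v \<in> On_set a n"
| On_add: "x \<in> On_set a n \<Longrightarrow> y \<in> On_set a n \<Longrightarrow> vadd x y \<in> On_set a n"
| On_scale: "x \<in> On_set a n \<Longrightarrow> vscale c x \<in> On_set a n"

text \<open>Preimage in M(1) of the subalgebra of A_n(M_a(1)) generated by the classes of G: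
  the smallest subset containing G and O_n, closed under linear combinations and *_n.\<close>
inductive_set Zhu_gen :: "complex \<Rightarrow> nat \<Rightarrow> vec set \<Rightarrow> vec set" for a n G where
  Zg_gen: "x \<in> G \<Longrightarrow> x \<in> Zhu_gen a n G"
| Zg_On: "x \<in> On_set a n \<Longrightarrow> x \<in> Zhu_gen a n G"
| Zg_add: "x \<in> Zhu_gen a n G \<Longrightarrow> y \<in> Zhu_gen a n G \<Longrightarrow> vadd x y \<in> Zhu_gen a n G"
| Zg_scale: "x \<in> Zhu_gen a n G \<Longrightarrow> vscale c x \<in> Zhu_gen a n G"
| Zg_star: "x \<in> Zhu_gen a n G \<Longrightarrow> y \<in> Zhu_gen a n G \<Longrightarrow> star_n n x y \<in> Zhu_gen a n G"

end

theory Submission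
  imports Defs
begin


lemma vsupp_bvec[simp]: "vsupp (bvec M) = {M}"
  by (auto simp: vsupp_def bvec_def)

lemma lin_ext_bvec[simp]: "lin_ext f (bvec P) = f P"
  unfolding lin_ext_def vsupp_bvec by (simp add: bvec_def)

lemma vscale_zero[simp]: "vscale 0 v = vzero"
  by (simp add: vscale_def vzero_def)

lemma vscale_one[simp]: "vscale 1 v = v"
  by (simp add: vscale_def)

lemma alpha_bvec:
  "alpha m (bvec M) = (if m < 0 then bvec (add_mset (nat (- m)) M) else if m = 0 then vzero
     else vscale (of_int m * of_nat (count M (nat m))) (bvec (M - {#nat m#})))"
  unfolding alpha_def by simp

lemma vsupp_vscale: "vsupp (vscale s v) = (if s = 0 then {} else vsupp v)"
  by (auto simp: vsupp_def vscale_def)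

lemma lin_ext_vscale: "lin_ext f (vscale s v) = vscale s (lin_ext f v)"
proof (cases "s = 0")
  case True then show ?thesis by (simp add: lin_ext_def vsupp_vscale vscale_def)
next
  case False then show ?thesis
    unfolding lin_ext_def vsupp_vscale by (simp add: vscale_def sum_distrib_left mult.assoc)
qed

lemma alpha_vscale: "alpha m (vscale s v) = vscale s (alpha m v)"
  unfolding alpha_def by (rule lin_ext_vscale)

lemma foldr_alpha_vscale: "foldr alpha ls (vscale s v) = vscale s (foldr alpha ls v)"
  by (induction ls) (simp_all add: alpha_vscale)

lemma vscale_vscale: "vscale s (vscale t v) = vscale (s * t) v"
  by (simp add: vscale_def mult.assoc)

lemma alpha_vzero: "alpha m vzero = vzero"
  using alpha_vscale[of m 0 vzero] by simp

lemma foldr_alpha_bvec: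
  "\<exists>s Q. foldr alpha ls (bvec P) = vscale s (bvec Q) \<and>
     (s \<noteq> 0 \<longrightarrow> 0 \<notin> set ls \<and>
        Q + mset (map nat (filter (\<lambda>m. 0 < m) ls)) =
        P + mset (map (\<lambda>m. nat (- m)) (filter (\<lambda>m. m < 0) ls)))"
proof (induction ls)
  case Nil
  show ?case by (rule exI[of _ 1], rule exI[of _ P]) simp
next
  case (Cons l ls)
  then obtain s Q where e: "foldr alpha ls (bvec P) = vscale s (bvec Q)"
    and h: "s \<noteq> 0 \<longrightarrow> 0 \<notin> set ls \<and>
        Q + mset (map nat (filter (\<lambda>m. 0 < m) ls)) =
        P + mset (map (\<lambda>m. nat (- m)) (filter (\<lambda>m. m < 0) ls))" by blast
  have fe: "foldr alpha (l # ls) (bvec P) = vscale s (alpha l (bvec Q))"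
    using e by (simp add: alpha_vscale)
  show ?case
  proof (cases "l < 0")
    case True
    have f2: "foldr alpha (l # ls) (bvec P) = vscale s (bvec (add_mset (nat (- l)) Q))"
      using True by (simp only: fe alpha_bvec if_True)
    show ?thesis
      by (rule exI[of _ s], rule exI[of _ "add_mset (nat (- l)) Q"], rule conjI[OF f2])
         (use True h in auto)
  next
    case False
    show ?thesis
    proof (cases "l = 0")
      case True
      show ?thesis
      proof -
        have "foldr alpha (l # ls) (bvec P) = vscale 0 (bvec Q)"
          unfolding fe using True by (simp add: alpha_bvec vscale_def vzero_def)
        then show ?thesis by blast
      qed
    next
      case l0: False
      let ?t = "s * (of_int l * of_nat (count Q (nat l)))"
      show ?thesis
      proof (rule exI[of _ ?t], rule exI[of _ "Q - {#nat l#}"], intro conjI impI)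
        show "foldr alpha (l # ls) (bvec P) = vscale ?t (bvec (Q - {#nat l#}))"
          unfolding fe using False l0 by (simp add: alpha_bvec vscale_vscale)
      next
        assume t: "?t \<noteq> 0"
        then have s0: "s \<noteq> 0" and c: "count Q (nat l) \<noteq> 0" by auto
        then have "nat l \<in># Q" by (simp add: count_inI)
        then have QQ: "Q - {#nat l#} + {#nat l#} = Q" by simp
        show "0 \<notin> set (l # ls)" using h s0 l0 by auto
        show "Q - {#nat l#} + mset (map nat (filter (\<lambda>m. 0 < m) (l # ls))) =
          P + mset (map (\<lambda>m. nat (- m)) (filter (\<lambda>m. m < 0) (l # ls)))"
        proof -
          have lp: "0 < l" using False l0 by simp
          have "Q - {#nat l#} + mset (map nat (filter (\<lambda>m. 0 < m) (l # ls)))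
              = (Q - {#nat l#} + {#nat l#}) + mset (map nat (filter (\<lambda>m. 0 < m) ls))"
            using lp by simp
          also have "\<dots> = P + mset (map (\<lambda>m. nat (- m)) (filter (\<lambda>m. m < 0) ls))"
            unfolding QQ using h s0 by blast
          also have "\<dots> = P + mset (map (\<lambda>m. nat (- m)) (filter (\<lambda>m. m < 0) (l # ls)))"
            using lp by simp
          finally show ?thesis .
        qed
      qed
    qed
  qed
qed

lemma foldr_comp_id: "foldr (\<lambda>m f. alpha m \<circ> f) xs id = foldr alpha xs"
  by (induction xs) auto

lemma normal_prod_eq: "normal_prod ms v =
   foldr alpha (filter (\<lambda>m. m < 0) ms @ filter (\<lambda>m. 0 \<le> m) ms) v"
  unfolding normal_prod_def foldr_comp_id ..

lemma Ymode_bvec: "Ymode (bvec K) p (bvec P) = Ymode_basis K p P"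
  unfolding Ymode_def vsupp_bvec lin_ext_bvec by (simp add: bvec_def)

lemma wproj_bvec: "wproj (sum_mset K) (bvec K) = bvec K"
  by (auto simp: wproj_def bvec_def)

lemma star_n_bvec: "star_n n (bvec K) v = star_hom n (sum_mset K) (bvec K) v"
  unfolding star_n_def vsupp_bvec by (simp add: wproj_bvec)

lemma Zg_zero: "vzero \<in> Zhu_gen a n G"
  by (intro Zg_On On_zero)

lemma Zg_sum:
  assumes "\<And>x. x \<in> A \<Longrightarrow> g x \<in> Zhu_gen a n G"
  shows "(\<lambda>L. \<Sum>x\<in>A. g x L) \<in> Zhu_gen a n G"
proof (cases "finite A")
  case True
  then show ?thesis using assms
  proof (induction A rule: finite_induct)
    case empty
    then show ?case using Zg_zero by (simp add: vzero_def)
  next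
    case (insert x F)
    have "vadd (g x) (\<lambda>L. \<Sum>x\<in>F. g x L) \<in> Zhu_gen a n G"
      using insert by (intro Zg_add) auto
    then show ?case using insert by (simp add: vadd_def)
  qed
next
  case False
  then show ?thesis using Zg_zero by (simp add: vzero_def)
qed

lemma Zg_isolate:
  assumes X: "X \<in> Zhu_gen a n G" and fin: "finite B"
    and supp: "\<And>L. X L \<noteq> 0 \<Longrightarrow> L = N \<or> L \<in> B"
    and NB: "N \<notin> B" and XN: "X N \<noteq> 0"
    and IH: "\<And>L. L \<in> B \<Longrightarrow> bvec L \<in> Zhu_gen a n G"
  shows "bvec N \<in> Zhu_gen a n G"
proof -
  define Y where "Y = (\<lambda>L. \<Sum>b\<in>B. vscale (X b) (bvec b) L)"
  have Y: "Y \<in> Zhu_gen a n G"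
    unfolding Y_def by (rule Zg_sum) (intro Zg_scale IH)
  have YL: "Y L = (if L \<in> B then X L else 0)" for L
    unfolding Y_def vscale_def bvec_def using fin
    by (simp add: if_distrib[of "\<lambda>x. _ * x"] sum.delta' cong: if_cong)
  have eq: "bvec N = vscale (1 / X N) (vadd X (vscale (-1) Y))"
  proof
    fix L
    show "bvec N L = vscale (1 / X N) (vadd X (vscale (-1) Y)) L"
      using supp[of L] NB XN by (auto simp: bvec_def vscale_def vadd_def YL)
  qed
  show ?thesis unfolding eq
    by (intro Zg_scale Zg_add X Y)
qed



lemma choose_prod_swap: "((m + n) choose n) * ((c + n) choose (n + m)) = ((c + n) choose n) * (c choose m)"
proof (cases "m \<le> c")
  case True
  have "((c + n) choose (n + m)) * ((n + m) choose n) = ((c + n) choose n) * ((c + n - n) choose (n + m - n))"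
    by (rule choose_mult) (use True in auto)
  then show ?thesis by (simp add: add.commute mult.commute)
next
  case False
  then show ?thesis by (simp add: binomial_eq_0)
qed

lemma alt_sum_S:
  assumes "c \<ge> 1"
  shows "(\<Sum>m\<le>n. (-1) ^ m * of_nat ((m + n) choose n) * of_nat ((c + n) choose (n + m)) :: complex)
         = (-1) ^ n * of_nat ((c - 1) choose n) * of_nat ((c + n) choose n)"
proof -
  have "(\<Sum>m\<le>n. (-1) ^ m * of_nat ((m + n) choose n) * of_nat ((c + n) choose (n + m)) :: complex)
      = (\<Sum>m\<le>n. of_nat ((c + n) choose n) * ((of_nat c gchoose m) * (-1) ^ m))"
  proof (intro sum.cong refl)
    fix m
    have e: "(of_nat ((m + n) choose n) * of_nat ((c + n) choose (n + m)) :: complex)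
        = of_nat ((c + n) choose n) * (of_nat c gchoose m)"
    proof -
      have e0: "(of_nat ((m + n) choose n) * of_nat ((c + n) choose (n + m)) :: complex)
          = of_nat ((c + n) choose n) * of_nat (c choose m)"
        by (simp only: of_nat_mult[symmetric] choose_prod_swap)
      then show ?thesis unfolding binomial_gbinomial[of c m, symmetric] .
    qed
    show "(-1) ^ m * of_nat ((m + n) choose n) * of_nat ((c + n) choose (n + m)) =
        of_nat ((c + n) choose n) * ((of_nat c gchoose m) * (-1) ^ m :: complex)"
      using e by (metis mult.assoc mult.commute)
  qed
  also have "\<dots> = of_nat ((c + n) choose n) * ((-1) ^ n * (of_nat c - 1 gchoose n))"
    by (simp add: sum_distrib_left[symmetric] gbinomial_sum_lower_neg)
  also have "(of_nat c - 1 :: complex) = of_nat (c - 1)" using assms by (simp add: of_nat_diff)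
  finally show ?thesis by (simp add: binomial_gbinomial[symmetric] mult_ac)
qed

lemma S_nonzero:
  assumes "c > n"
  shows "(\<Sum>m\<le>n. (-1) ^ m * of_nat ((m + n) choose n) * of_nat ((c + n) choose (n + m)) :: complex) \<noteq> 0"
  using assms by (subst alt_sum_S) auto

lemma S_one:
  assumes "n \<ge> 1"
  shows "(\<Sum>m\<le>n. (-1) ^ m * of_nat ((m + n) choose n) * of_nat ((1 + n) choose (n + m)) :: complex) = 0"
  using assms alt_sum_S[of 1 n] by simp

lemma sum_ind: "(\<Sum>i\<le>K. of_nat (K choose i) * (if i = t then 1 else 0) :: complex) = of_nat (K choose t)"
  by (cases "t \<le> K") (auto simp: if_distrib[of "\<lambda>x. _ * x"] cong: if_cong)

lemma normal_prod_single: "normal_prod [q] v = alpha q v"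
  by (simp add: normal_prod_eq)

lemma Ymode_basis_single:
  "Ymode_basis {#k#} p M =
     vscale ((of_int (- (p + 1 - int k) - 1) :: complex) gchoose (k - 1)) (alpha (p + 1 - int k) (bvec M))"
proof -
  define T where "T = (\<lambda>ms. vscale (mode_coef [k] ms) (normal_prod ms (bvec M)))"
  define q where "q = p + 1 - int k"
  have Tq: "T [q] = vscale ((of_int (- q - 1) :: complex) gchoose (k - 1)) (alpha q (bvec M))"
    by (simp add: T_def mode_coef_def normal_prod_single)
  have S: "{ms. length ms = length [k] \<and> sum_list ms + int (sum_list [k]) = p + 1 \<and> T ms \<noteq> vzero}
      = (if T [q] = vzero then {} else {[q]})"
    apply (auto simp: length_Suc_conv q_def)
    apply (subgoal_tac "y = p + 1 - int k")
     apply auto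
    done
  have "Ymode_basis {#k#} p M = (\<lambda>L. \<Sum>ms\<in>{ms. length ms = length [k] \<and> sum_list ms + int (sum_list [k]) = p + 1 \<and> T ms \<noteq> vzero}. T ms L)"
    unfolding Ymode_basis_def T_def Let_def by simp
  also have "\<dots> = T [q]"
    unfolding S by (auto simp: vzero_def)
  finally have A: "Ymode_basis {#k#} p M = T [q]" .
  show ?thesis using trans[OF A Tq] unfolding q_def .
qed

lemma alpha_bvec_nonpos:
  assumes "q \<le> 0"
  shows "alpha q (bvec M) L = (if q < 0 \<and> L = add_mset (nat (- q)) M then 1 else 0)"
  unfolding alpha_bvec using assms by (auto simp: vzero_def bvec_def)

definition gq :: "nat \<Rightarrow> int \<Rightarrow> complex" where
  "gq k q = (of_int (- q - 1) :: complex) gchoose (k - 1)"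

lemma star_single:
  "star_n n (bvec {#k#}) (bvec M) L =
    (\<Sum>m\<le>n. (-1) ^ m * of_nat ((m + n) choose n) *
       (\<Sum>i\<le>k + n. of_nat ((k + n) choose i) *
          (gq k (int i - int n - int m - int k) *
           (if int i - int n - int m - int k < 0 \<and> L = add_mset (nat (- (int i - int n - int m - int k))) M
            then 1 else 0))))"
proof -
  have "star_n n (bvec {#k#}) (bvec M) L = star_hom n k (bvec {#k#}) (bvec M) L"
    using star_n_bvec[of n "{#k#}"] by simp
  also have "\<dots> = (\<Sum>m\<le>n. (-1) ^ m * of_nat ((m + n) choose n) *
       (\<Sum>i\<le>k + n. of_nat ((k + n) choose i) *
          (gq k (int i - int n - int m - int k) *
           (if int i - int n - int m - int k < 0 \<and> L = add_mset (nat (- (int i - int n - int m - int k))) M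
            then 1 else 0))))"
    unfolding star_hom_def
  proof (intro sum.cong refl arg_cong2[where f="(*)"])
    fix m i assume i: "i \<in> {..k + n}"
    have eq: "int i - int n - int m - 1 + 1 - int k = int i - int n - int m - int k" by simp
    have le: "int i - int n - int m - int k \<le> 0" using i by auto
    show "Ymode (bvec {#k#}) (int i - int n - int m - 1) (bvec M) L =
       gq k (int i - int n - int m - int k) *
       (if int i - int n - int m - int k < 0 \<and> L = add_mset (nat (- (int i - int n - int m - int k))) M
        then 1 else 0)"
      unfolding Ymode_bvec Ymode_basis_single eq
      by (simp add: vscale_def gq_def alpha_bvec_nonpos[OF le])
  qed
  finally show ?thesis .
qed

lemma case2_top:
  assumes "k \<ge> 1"
  shows "star_n n (bvec {#k#}) (bvec M) (add_mset (2 * n + k) M) \<noteq> 0"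
proof -
  have ind: "(int i - int n - int m - int k < 0 \<and> add_mset (2 * n + k) M = add_mset (nat (- (int i - int n - int m - int k))) M)
      \<longleftrightarrow> (i = 0 \<and> m = n)" if "m \<le> n" for i m
    using that assms by auto
  have inner: "(\<Sum>i\<le>k + n. of_nat ((k + n) choose i) *
          (gq k (int i - int n - int m - int k) *
           (if int i - int n - int m - int k < 0 \<and> add_mset (2 * n + k) M = add_mset (nat (- (int i - int n - int m - int k))) M
            then 1 else 0))) = (if m = n then gq k (- int (2 * n + k)) else 0)" if "m \<le> n" for m
  proof -
    have "(\<Sum>i\<le>k + n. of_nat ((k + n) choose i) *
          (gq k (int i - int n - int m - int k) *
           (if int i - int n - int m - int k < 0 \<and> add_mset (2 * n + k) M = add_mset (nat (- (int i - int n - int m - int k))) M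
            then 1 else 0))) = (\<Sum>i\<le>k + n. if i = 0 then (if m = n then gq k (- int (2 * n + k)) else 0) else 0)"
    proof (intro sum.cong refl)
      fix i
      show "of_nat ((k + n) choose i) *
          (gq k (int i - int n - int m - int k) *
           (if int i - int n - int m - int k < 0 \<and> add_mset (2 * n + k) M = add_mset (nat (- (int i - int n - int m - int k))) M
            then 1 else 0)) = (if i = 0 then (if m = n then gq k (- int (2 * n + k)) else 0) else 0)"
        apply (subst ind[OF that])
        apply (cases "i = 0 \<and> m = n")
         apply (subgoal_tac "int i - int n - int m - int k = - int (2 * n + k)")
          apply simp
         apply simp
        apply simp
        done
    qed
    also have "\<dots> = (if m = n then gq k (- int (2 * n + k)) else 0)" by simp
    finally show ?thesis .
  qed
  have "star_n n (bvec {#k#}) (bvec M) (add_mset (2 * n + k) M) =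
      (\<Sum>m\<le>n. (-1) ^ m * of_nat ((m + n) choose n) * (if m = n then gq k (- int (2 * n + k)) else 0))"
    unfolding star_single
    apply (rule sum.cong[OF refl])
    apply (subst inner)
     apply auto
    done
  also have "\<dots> = (-1) ^ n * of_nat ((n + n) choose n) * gq k (- int (2 * n + k))"
    by (simp add: if_distrib[of "\<lambda>x. _ * x"] cong: if_cong)
  also have "gq k (- int (2 * n + k)) = of_nat ((2 * n + k - 1) choose (k - 1))"
  proof -
    have "(of_int (- (- int (2 * n + k)) - 1) :: complex) = of_nat (2 * n + k - 1)"
      using assms by (simp add: of_nat_diff)
    then show ?thesis unfolding gq_def by (simp add: binomial_gbinomial)
  qed
  finally show ?thesis using assms by simp
qed

lemma case2_one:
  assumes "k \<ge> 1" "n \<ge> 1"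
  shows "star_n n (bvec {#k#}) (bvec M) (add_mset 1 M) = 0"
proof -
  have ind: "(int i - int n - int m - int k < 0 \<and> add_mset 1 M = add_mset (nat (- (int i - int n - int m - int k))) M)
      \<longleftrightarrow> (i = n + m + k - 1)" if "i \<le> k + n" for i m
    using that assms by auto
  have g: "gq k (int (n + m + k - 1) - int n - int m - int k) = (if k = 1 then 1 else 0)" for m
  proof (cases "k = 1")
    case True then show ?thesis by (simp add: gq_def)
  next
    case False
    then obtain j where j: "k - 1 = Suc j" using assms by (cases "k - 1") auto
    have "int (n + m + k - 1) - int n - int m - int k = -1" using assms by simp
    then show ?thesis using False j by (simp add: gq_def)
  qed
  have inner: "(\<Sum>i\<le>k + n. of_nat ((k + n) choose i) *
          (gq k (int i - int n - int m - int k) *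
           (if int i - int n - int m - int k < 0 \<and> add_mset 1 M = add_mset (nat (- (int i - int n - int m - int k))) M
            then 1 else 0))) = (if k = 1 then of_nat ((1 + n) choose (n + m)) else 0)" for m
  proof -
    have "(\<Sum>i\<le>k + n. of_nat ((k + n) choose i) *
          (gq k (int i - int n - int m - int k) *
           (if int i - int n - int m - int k < 0 \<and> add_mset 1 M = add_mset (nat (- (int i - int n - int m - int k))) M
            then 1 else 0))) = (\<Sum>i\<le>k + n. of_nat ((k + n) choose i) * (if i = n + m + k - 1 then (if k = 1 then 1 else 0) else 0))"
    proof (intro sum.cong refl)
      fix i assume i: "i \<in> {..k + n}"
      show "of_nat ((k + n) choose i) *
          (gq k (int i - int n - int m - int k) *
           (if int i - int n - int m - int k < 0 \<and> add_mset 1 M = add_mset (nat (- (int i - int n - int m - int k))) M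
            then 1 else 0)) = of_nat ((k + n) choose i) * (if i = n + m + k - 1 then (if k = 1 then 1 else 0) else (0::complex))"
        apply (subst ind[of i m, OF i[unfolded atMost_iff]])
        apply (cases "i = n + m + k - 1")
         apply (simp only: g if_True)
         apply simp
        apply simp
        done
    qed
    also have "\<dots> = (if k = 1 then of_nat ((1 + n) choose (n + m)) else 0)"
    proof (cases "k = 1")
      case True
      have e1: "n + m + k - 1 = n + m" "k + n = 1 + n" using True by auto
      show ?thesis unfolding e1
        by (simp only: True simp_thms(6) if_True) (rule sum_ind)
    qed simp
    finally show ?thesis .
  qed
  have "star_n n (bvec {#k#}) (bvec M) (add_mset 1 M) =
      (\<Sum>m\<le>n. (-1) ^ m * of_nat ((m + n) choose n) * (if k = 1 then of_nat ((1 + n) choose (n + m)) else 0))"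
    unfolding star_single
    apply (rule sum.cong[OF refl])
    apply (subst inner)
     apply auto
    done
  also have "\<dots> = 0"
    using S_one[OF assms(2)] by (cases "k = 1") simp_all
  finally show ?thesis .
qed

lemma case2_supp:
  assumes "star_n n (bvec {#k#}) (bvec M) L \<noteq> 0"
  shows "\<exists>r. 1 \<le> r \<and> r \<le> 2 * n + k \<and> L = add_mset r M"
proof (rule ccontr)
  assume na: "\<not> ?thesis"
  have nc: "\<not> (int i - int n - int m - int k < 0 \<and> L = add_mset (nat (- (int i - int n - int m - int k))) M)"
    if "m \<le> n" "i \<le> k + n" for m i
  proof
    assume c: "int i - int n - int m - int k < 0 \<and> L = add_mset (nat (- (int i - int n - int m - int k))) M"
    have "1 \<le> nat (- (int i - int n - int m - int k))" "nat (- (int i - int n - int m - int k)) \<le> 2 * n + k"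
      using c that by auto
    then show False using na c by blast
  qed
  have z: "of_nat ((k + n) choose i) *
          (gq k (int i - int n - int m - int k) *
           (if int i - int n - int m - int k < 0 \<and> L = add_mset (nat (- (int i - int n - int m - int k))) M
            then 1 else 0)) = (0::complex)" if "m \<le> n" "i \<le> k + n" for m i
    by (simp only: if_not_P[OF nc[OF that]] mult_zero_right)
  have inner: "(\<Sum>i\<le>k + n. of_nat ((k + n) choose i) *
          (gq k (int i - int n - int m - int k) *
           (if int i - int n - int m - int k < 0 \<and> L = add_mset (nat (- (int i - int n - int m - int k))) M
            then 1 else 0))) = (0::complex)" if "m \<le> n" for m
    by (intro sum.neutral ballI z that) auto
  have "star_n n (bvec {#k#}) (bvec M) L = 0"
    unfolding star_single
    by (intro sum.neutral ballI) (simp only: inner atMost_iff mult_zero_right)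
  with assms show False by simp
qed



definition Posm :: "int list \<Rightarrow> nat multiset" where
  "Posm ms = mset (map nat (filter (\<lambda>m. 0 < m) ms))"
definition Negm :: "int list \<Rightarrow> nat multiset" where
  "Negm ms = mset (map (\<lambda>m. nat (- m)) (filter (\<lambda>m. m < 0) ms))"

lemma filt1: "filter (\<lambda>m. 0 < m) (filter (\<lambda>m. 0 \<le> m) ms) = filter (\<lambda>m. 0 < (m::int)) ms"
  by (induction ms) auto
lemma filt2: "filter (\<lambda>m. m < (0::int)) (filter (\<lambda>m. 0 \<le> m) ms) = []"
  by (induction ms) auto
lemma filt3: "filter (\<lambda>m. (0::int) < m) (filter (\<lambda>m. m < 0) ms) = []"
  by (induction ms) auto
lemma filt4: "filter (\<lambda>m. m < 0) (filter (\<lambda>m. m < 0) ms) = filter (\<lambda>m. m < (0::int)) ms"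
  by (induction ms) auto

lemma NP:
  "\<exists>s Q. normal_prod ms (bvec P) = vscale s (bvec Q) \<and>
     (s \<noteq> 0 \<longrightarrow> 0 \<notin> set ms \<and> Q + Posm ms = P + Negm ms \<and> Posm ms \<subseteq># P)"
proof -
  define nn where "nn = filter (\<lambda>m. 0 \<le> m) ms"
  define ng where "ng = filter (\<lambda>m. m < 0) ms"
  have np: "normal_prod ms (bvec P) = foldr alpha ng (foldr alpha nn (bvec P))"
    unfolding normal_prod_eq nn_def ng_def by simp
  obtain s1 Q1 where e1: "foldr alpha nn (bvec P) = vscale s1 (bvec Q1)"
    and h1: "s1 \<noteq> 0 \<longrightarrow> 0 \<notin> set nn \<and> Q1 + Posm ms = P"
    using foldr_alpha_bvec[of nn P] unfolding nn_def Posm_def filt1 filt2 by auto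
  obtain s2 Q2 where e2: "foldr alpha ng (bvec Q1) = vscale s2 (bvec Q2)"
    and h2: "s2 \<noteq> 0 \<longrightarrow> 0 \<notin> set ng \<and> Q2 = Q1 + Negm ms"
    using foldr_alpha_bvec[of ng Q1] unfolding ng_def Negm_def filt3 filt4 by auto
  have "normal_prod ms (bvec P) = vscale (s1 * s2) (bvec Q2)"
    unfolding np e1 foldr_alpha_vscale e2 vscale_vscale ..
  moreover have "s1 * s2 \<noteq> 0 \<longrightarrow> 0 \<notin> set ms \<and> Q2 + Posm ms = P + Negm ms \<and> Posm ms \<subseteq># P"
  proof
    assume "s1 * s2 \<noteq> 0"
    then have a: "0 \<notin> set nn" "Q1 + Posm ms = P" "0 \<notin> set ng" "Q2 = Q1 + Negm ms"
      using h1 h2 by auto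
    have "0 \<notin> set ms" using a(1) unfolding nn_def by auto
    moreover have "Q2 + Posm ms = P + Negm ms" using a(2,4)
      by (metis add.assoc add.commute)
    moreover have "Posm ms \<subseteq># P" using a(2) by (metis mset_subset_eq_add_right)
    ultimately show "0 \<notin> set ms \<and> Q2 + Posm ms = P + Negm ms \<and> Posm ms \<subseteq># P" by blast
  qed
  ultimately show ?thesis by blast
qed

lemma NP_supp:
  assumes "normal_prod ms (bvec P) L \<noteq> 0"
  shows "0 \<notin> set ms \<and> L + Posm ms = P + Negm ms \<and> Posm ms \<subseteq># P"
proof -
  obtain s Q where e: "normal_prod ms (bvec P) = vscale s (bvec Q)"
    and h: "s \<noteq> 0 \<longrightarrow> 0 \<notin> set ms \<and> Q + Posm ms = P + Negm ms \<and> Posm ms \<subseteq># P"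
    using NP by blast
  from assms have "s \<noteq> 0" "L = Q" unfolding e by (auto simp: vscale_def bvec_def split: if_splits)
  then show ?thesis using h by simp
qed

lemma NP_fin: "finite (vsupp (normal_prod ms (bvec P)))"
proof -
  obtain s Q where e: "normal_prod ms (bvec P) = vscale s (bvec Q)"
    using NP by blast
  have "vsupp (normal_prod ms (bvec P)) \<subseteq> {Q}"
    unfolding e by (auto simp: vsupp_def vscale_def bvec_def split: if_splits)
  then show ?thesis using finite_subset by blast
qed

lemma size_PosNeg: "size (Posm ms) + size (Negm ms) \<le> length ms"
  unfolding Posm_def Negm_def size_mset length_map by (induction ms) auto

lemma size_Negm: "size (Negm ms) = length (filter (\<lambda>m. m < 0) ms)"
  unfolding Negm_def size_mset length_map ..

lemma size_Posm: "size (Posm ms) = length (filter (\<lambda>m. 0 < m) ms)"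
  unfolding Posm_def size_mset length_map ..

lemma rep_neg: "foldr alpha (replicate c (-1)) (bvec P) = bvec (P + replicate_mset c 1)"
  by (induction c) (simp_all add: alpha_bvec del: foldr_replicate)

lemma normal_prod_rep: "normal_prod (replicate c (-1)) (bvec P) = bvec (P + replicate_mset c 1)"
proof -
  have "filter (\<lambda>m. m < 0) (replicate c (-1::int)) = replicate c (-1)"
       "filter (\<lambda>m. 0 \<le> m) (replicate c (-1::int)) = []"
    by (induction c) auto
  then show ?thesis unfolding normal_prod_eq by (simp only: append_Nil2 rep_neg)
qed

definition Srep :: "nat \<Rightarrow> int \<Rightarrow> nat multiset \<Rightarrow> int list set" where
  "Srep c p P = {ms. length ms = c \<and> sum_list ms + int c = p + 1 \<and> normal_prod ms (bvec P) \<noteq> vzero}"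

lemma sorted_rep: "sorted_list_of_multiset (replicate_mset c (1::nat)) = replicate c 1"
proof -
  let ?ks = "sorted_list_of_multiset (replicate_mset c (1::nat))"
  have m: "mset ?ks = replicate_mset c 1" by simp
  have l: "length ?ks = c" by (metis m size_mset size_replicate_mset)
  have "\<forall>y\<in>set ?ks. y = 1"
    using arg_cong[OF m, of set_mset] by (auto simp del: mset_sorted_list_of_multiset)
  from replicate_length_same[OF this] l show ?thesis by simp
qed

lemma mode_coef_rep: "mode_coef (replicate c 1) ms = 1"
  unfolding mode_coef_def by simp

lemma Yb_rep: "Ymode_basis (replicate_mset c 1) p P = (\<lambda>L. \<Sum>ms\<in>Srep c p P. normal_prod ms (bvec P) L)"
  unfolding Ymode_basis_def Let_def sorted_rep mode_coef_rep Srep_def by (simp add: sum_list_replicate)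

lemma sum_filter_bound:
  fixes xs :: "int list"
  assumes "x \<in> set xs"
  shows "sum_list xs \<le> x + sum_list (filter (\<lambda>y. 0 < y) xs)"
proof -
  have base: "sum_list ys \<le> sum_list (filter (\<lambda>y. 0 < y) ys)" for ys :: "int list"
    by (induction ys) auto
  show ?thesis using assms
  proof (induction xs)
    case Nil then show ?case by simp
  next
    case (Cons y ys)
    show ?case
    proof (cases "x = y")
      case True
      then show ?thesis using base[of ys] by auto
    next
      case False
      then have "x \<in> set ys" using Cons.prems by simp
      then show ?thesis using Cons.IH by auto
    qed
  qed
qed

lemma sum_le_len:
  fixes l :: "int list"
  assumes "\<forall>y\<in>set l. y \<le> B"
  shows "sum_list l \<le> int (length l) * B"
  using assms by (induction l) (auto simp: algebra_simps)

lemma mem_le_sum_mset: "(a::nat) \<in># A \<Longrightarrow> a \<le> sum_mset A"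
  by (metis le_add1 sum_mset.remove)

lemma Srep_finite: "finite (Srep c p P)"
proof -
  define hi where "hi = int (sum_mset P)"
  define lo where "lo = p + 1 - int c - int c * hi"
  have sub: "Srep c p P \<subseteq> {xs. set xs \<subseteq> {lo..hi} \<and> length xs = c}"
  proof
    fix ms assume ms: "ms \<in> Srep c p P"
    then have len: "length ms = c" and sm: "sum_list ms + int c = p + 1"
      and nz: "normal_prod ms (bvec P) \<noteq> vzero" unfolding Srep_def by auto
    from nz obtain L where "normal_prod ms (bvec P) L \<noteq> 0" unfolding vzero_def by auto
    from NP_supp[OF this] have sub: "Posm ms \<subseteq># P" by blast
    have hi0: "0 \<le> hi" unfolding hi_def by (rule of_nat_0_le_iff)
    have pos_le: "y \<le> hi" if "y \<in> set ms" for y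
    proof (cases "0 < y")
      case True
      then have "nat y \<in># Posm ms" using that unfolding Posm_def by auto
      then have "nat y \<in># P" using sub by (meson mset_subset_eqD)
      then have "nat y \<le> sum_mset P" by (rule mem_le_sum_mset)
      then have "int (nat y) \<le> int (sum_mset P)" by (rule of_nat_mono)
      then show ?thesis unfolding hi_def using True by linarith
    next
      case False then show ?thesis using hi0 by simp
    qed
    have "sum_list (filter (\<lambda>y. 0 < y) ms) \<le> int (length (filter (\<lambda>y. 0 < y) ms)) * hi"
      by (rule sum_le_len) (use pos_le in auto)
    also have "\<dots> \<le> int c * hi"
      using len hi0 by (intro mult_right_mono) (auto simp: length_filter_le)
    finally have sp: "sum_list (filter (\<lambda>y. 0 < y) ms) \<le> int c * hi" .
    have "set ms \<subseteq> {lo..hi}"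
    proof
      fix x assume x: "x \<in> set ms"
      have "sum_list ms \<le> x + sum_list (filter (\<lambda>y. 0 < y) ms)" by (rule sum_filter_bound[OF x])
      then have "lo \<le> x" unfolding lo_def using sm sp by linarith
      then show "x \<in> {lo..hi}" using pos_le[OF x] by simp
    qed
    then show "ms \<in> {xs. set xs \<subseteq> {lo..hi} \<and> length xs = c}" using len by simp
  qed
  show ?thesis by (rule finite_subset[OF sub]) (rule finite_lists_length_eq, simp)
qed

lemma Pos_Neg_sizes:
  assumes "L + Posm ms = P + Negm ms" "length ms = c"
  shows "size L + size (Posm ms) = size P + size (Negm ms)"
    "size (Posm ms) + size (Negm ms) \<le> c"
  using arg_cong[OF assms(1), of size] size_PosNeg[of ms] assms(2) by auto

lemma NP_at_N:
  assumes len: "length ms = c"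
  shows "normal_prod ms (bvec P) (P + replicate_mset c 1) = (if ms = replicate c (-1) then 1 else 0)"
proof (cases "ms = replicate c (-1)")
  case True
  show ?thesis unfolding True normal_prod_rep by (simp add: bvec_def)
next
  case False
  have "normal_prod ms (bvec P) (P + replicate_mset c 1) = 0"
  proof (rule ccontr)
    assume "normal_prod ms (bvec P) (P + replicate_mset c 1) \<noteq> 0"
    from NP_supp[OF this] have e: "P + replicate_mset c 1 + Posm ms = P + Negm ms" by blast
    then have e2: "replicate_mset c 1 + Posm ms = Negm ms"
      by (simp add: add.assoc)
    have s1: "c + size (Posm ms) = size (Negm ms)" using arg_cong[OF e2, of size] by simp
    have s2: "size (Posm ms) + size (Negm ms) \<le> c" using size_PosNeg[of ms] len by simp
    have "size (Posm ms) = 0" using s1 s2 by linarith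
    then have p0: "Posm ms = {#}" by (simp only: size_eq_0_iff_empty)
    have nl: "length (filter (\<lambda>m. m < 0) ms) = length ms" using s1 s2 len size_Negm[of ms] by simp
    have allneg: "\<forall>x\<in>set ms. x < 0"
    proof (rule ccontr)
      assume "\<not> (\<forall>x\<in>set ms. x < 0)"
      then obtain x where "x \<in> set ms" "\<not> x < 0" by blast
      from length_filter_less[of x ms "\<lambda>m. m < 0", OF this] nl show False by simp
    qed
    have ng: "Negm ms = replicate_mset c 1" using e2 p0 by simp
    have "\<forall>x\<in>set ms. x = -1"
    proof
      fix x assume x: "x \<in> set ms"
      then have "nat (- x) \<in># Negm ms" using allneg unfolding Negm_def by auto
      then have "nat (- x) = 1" unfolding ng by (simp split: if_splits)
      then show "x = -1" using allneg x by auto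
    qed
    from replicate_length_same[OF this] len False show False by simp
  qed
  then show ?thesis using False by simp
qed

lemma NP_smaller:
  assumes len: "length ms = c" and nz: "normal_prod ms (bvec P) L \<noteq> 0"
    and P1: "count P 1 = 0" and P0: "0 \<notin># P"
  shows "0 \<notin># L \<and> (size L < size (P + replicate_mset c 1) \<or>
     (size L = size (P + replicate_mset c 1) \<and> count L 1 < count (P + replicate_mset c 1) 1) \<or>
     L = P + replicate_mset c 1)"
proof -
  from NP_supp[OF nz] have e: "L + Posm ms = P + Negm ms" by blast
  have n0: "0 \<notin># Negm ms" unfolding Negm_def by auto
  have "L \<subseteq># P + Negm ms" using e by (metis mset_subset_eq_add_left)
  then have z: "0 \<notin># L" using P0 n0 by (meson mset_subset_eqD union_iff)
  have s1: "size L + size (Posm ms) = size P + size (Negm ms)" using arg_cong[OF e, of size] by simp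
  have s2: "size (Posm ms) + size (Negm ms) \<le> c" using size_PosNeg[of ms] len by simp
  have "size L < size (P + replicate_mset c 1) \<or>
     (size L = size (P + replicate_mset c 1) \<and> count L 1 < count (P + replicate_mset c 1) 1) \<or>
     L = P + replicate_mset c 1"
  proof (cases "size L < size P + c")
    case True then show ?thesis by simp
  next
    case False
    then have "size (Posm ms) = 0" and sn: "size (Negm ms) = c" using s1 s2 by linarith+
    then have p0: "Posm ms = {#}" by (simp only: size_eq_0_iff_empty)
    then have eL: "L = P + Negm ms" using e by simp
    have cL: "count L 1 = count (Negm ms) 1" using eL P1 by simp
    have cle: "count (Negm ms) 1 \<le> c" using sn by (metis count_le_size)
    show ?thesis
    proof (cases "count (Negm ms) 1 = c")
      case True
      have "{#y \<in># Negm ms. y = 1#} = Negm ms"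
      proof -
        have "size {#y \<in># Negm ms. y = 1#} = size (Negm ms)"
          using True sn by (simp add: count_conv_size_mset)
        then show ?thesis by (metis multiset_filter_subset subset_mset.antisym_conv2 mset_subset_size less_irrefl)
      qed
      then have "Negm ms = replicate_mset c 1" using True by (simp add: filter_eq_replicate_mset)
      then show ?thesis using eL by simp
    next
      case False
      then show ?thesis using cL cle eL sn P1 by simp
    qed
  qed
  then show ?thesis using z by blast
qed

lemma star_rep:
  "star_n n (bvec (replicate_mset c 1)) (bvec P) L =
    (\<Sum>m\<le>n. (-1) ^ m * of_nat ((m + n) choose n) *
       (\<Sum>i\<le>c + n. of_nat ((c + n) choose i) *
          (\<Sum>ms\<in>Srep c (int i - int n - int m - 1) P. normal_prod ms (bvec P) L)))"
proof -
  have "sum_mset (replicate_mset c (1::nat)) = c" by simp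
  then have "star_n n (bvec (replicate_mset c 1)) (bvec P) L = star_hom n c (bvec (replicate_mset c 1)) (bvec P) L"
    using star_n_bvec[of n "replicate_mset c 1"] by simp
  then show ?thesis unfolding star_hom_def Ymode_bvec Yb_rep by simp
qed

lemma rep_in_Srep: "replicate c (-1) \<in> Srep c p P \<longleftrightarrow> p = -1"
proof -
  have nz: "normal_prod (replicate c (-1)) (bvec P) \<noteq> vzero"
  proof
    assume "normal_prod (replicate c (-1)) (bvec P) = vzero"
    then have "bvec (P + replicate_mset c 1) (P + replicate_mset c 1) = vzero (P + replicate_mset c 1)"
      unfolding normal_prod_rep by simp
    then show False by (simp add: bvec_def vzero_def)
  qed
  have "sum_list (replicate c (-1::int)) = - int c" by (simp add: sum_list_replicate)
  then show ?thesis using nz unfolding Srep_def by auto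
qed

lemma case3_top:
  assumes "c > n"
  shows "star_n n (bvec (replicate_mset c 1)) (bvec P) (P + replicate_mset c 1) \<noteq> 0"
proof -
  have inner: "(\<Sum>ms\<in>Srep c p P. normal_prod ms (bvec P) (P + replicate_mset c 1)) = (if p = -1 then 1 else 0)" for p
  proof -
    have "(\<Sum>ms\<in>Srep c p P. normal_prod ms (bvec P) (P + replicate_mset c 1))
        = (\<Sum>ms\<in>Srep c p P. if replicate c (-1) = ms then 1 else 0)"
    proof (intro sum.cong refl)
      fix ms assume "ms \<in> Srep c p P"
      then have "length ms = c" unfolding Srep_def by simp
      from NP_at_N[OF this, of P] show "normal_prod ms (bvec P) (P + replicate_mset c 1) =
          (if replicate c (-1) = ms then 1 else 0)" by auto
    qed
    also have "\<dots> = (if p = -1 then 1 else 0)"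
      using Srep_finite[of c p P] rep_in_Srep[of c p P] by simp
    finally show ?thesis .
  qed
  have inner2: "(\<Sum>i\<le>c + n. of_nat ((c + n) choose i) *
          (\<Sum>ms\<in>Srep c (int i - int n - int m - 1) P. normal_prod ms (bvec P) (P + replicate_mset c 1)))
       = (of_nat ((c + n) choose (n + m)) :: complex)" for m
  proof -
    have "(\<Sum>i\<le>c + n. of_nat ((c + n) choose i) *
          (\<Sum>ms\<in>Srep c (int i - int n - int m - 1) P. normal_prod ms (bvec P) (P + replicate_mset c 1)))
        = (\<Sum>i\<le>c + n. of_nat ((c + n) choose i) * (if i = n + m then 1 else 0))"
    proof (intro sum.cong refl)
      fix i
      have "(int i - int n - int m - 1 = -1) = (i = n + m)" by auto
      then show "of_nat ((c + n) choose i) *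
          (\<Sum>ms\<in>Srep c (int i - int n - int m - 1) P. normal_prod ms (bvec P) (P + replicate_mset c 1))
          = of_nat ((c + n) choose i) * (if i = n + m then 1 else (0::complex))"
        by (simp only: inner)
    qed
    also have "\<dots> = of_nat ((c + n) choose (n + m))" by (rule sum_ind)
    finally show ?thesis .
  qed
  have "star_n n (bvec (replicate_mset c 1)) (bvec P) (P + replicate_mset c 1) =
      (\<Sum>m\<le>n. (-1) ^ m * of_nat ((m + n) choose n) * of_nat ((c + n) choose (n + m)))"
    unfolding star_rep inner2 ..
  then show ?thesis using S_nonzero[OF assms] by simp
qed

lemma case3_supp:
  assumes "star_n n (bvec (replicate_mset c 1)) (bvec P) L \<noteq> 0"
  shows "\<exists>ms. length ms = c \<and> normal_prod ms (bvec P) L \<noteq> 0"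
proof (rule ccontr)
  assume na: "\<not> ?thesis"
  have "(\<Sum>ms\<in>Srep c p P. normal_prod ms (bvec P) L) = 0" for p
    by (rule sum.neutral) (use na in \<open>auto simp: Srep_def\<close>)
  then have "star_n n (bvec (replicate_mset c 1)) (bvec P) L = 0"
    unfolding star_rep by simp
  with assms show False by simp
qed

lemma vsupp_sum_subset: "vsupp (\<lambda>L. \<Sum>a\<in>A. g a L) \<subseteq> (\<Union>a\<in>A. vsupp (g a))"
  unfolding vsupp_def by (auto elim: sum.not_neutral_contains_not_neutral)

lemma vsupp_cmul: "vsupp (\<lambda>L. c * g L) \<subseteq> vsupp g"
  unfolding vsupp_def by auto

lemma case3_fin: "finite (vsupp (star_n n (bvec (replicate_mset c 1)) (bvec P)))"
proof -
  let ?U = "\<Union>m\<in>{..n}. \<Union>i\<in>{..c + n}. \<Union>ms\<in>Srep c (int i - int n - int m - 1) P. vsupp (normal_prod ms (bvec P))"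
  have "vsupp (star_n n (bvec (replicate_mset c 1)) (bvec P)) \<subseteq> ?U"
  proof
    fix L assume "L \<in> vsupp (star_n n (bvec (replicate_mset c 1)) (bvec P))"
    then have "star_n n (bvec (replicate_mset c 1)) (bvec P) L \<noteq> 0" unfolding vsupp_def by simp
    then have "(\<Sum>m\<le>n. (-1) ^ m * of_nat ((m + n) choose n) *
       (\<Sum>i\<le>c + n. of_nat ((c + n) choose i) *
          (\<Sum>ms\<in>Srep c (int i - int n - int m - 1) P. normal_prod ms (bvec P) L))) \<noteq> 0"
      unfolding star_rep .
    then obtain m where m: "m \<in> {..n}" and
      "(-1) ^ m * of_nat ((m + n) choose n) *
       (\<Sum>i\<le>c + n. of_nat ((c + n) choose i) *
          (\<Sum>ms\<in>Srep c (int i - int n - int m - 1) P. normal_prod ms (bvec P) L)) \<noteq> (0::complex)"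
      by (rule sum.not_neutral_contains_not_neutral)
    then have "(\<Sum>i\<le>c + n. of_nat ((c + n) choose i) *
          (\<Sum>ms\<in>Srep c (int i - int n - int m - 1) P. normal_prod ms (bvec P) L)) \<noteq> 0" by auto
    then obtain i where i: "i \<in> {..c + n}" and
      "of_nat ((c + n) choose i) *
          (\<Sum>ms\<in>Srep c (int i - int n - int m - 1) P. normal_prod ms (bvec P) L) \<noteq> (0::complex)"
      by (rule sum.not_neutral_contains_not_neutral)
    then have "(\<Sum>ms\<in>Srep c (int i - int n - int m - 1) P. normal_prod ms (bvec P) L) \<noteq> 0" by auto
    then obtain ms where ms: "ms \<in> Srep c (int i - int n - int m - 1) P" and "normal_prod ms (bvec P) L \<noteq> 0"
      by (rule sum.not_neutral_contains_not_neutral)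
    then have "L \<in> vsupp (normal_prod ms (bvec P))" unfolding vsupp_def by simp
    then show "L \<in> ?U" using m i ms by blast
  qed
  moreover have "finite ?U" using Srep_finite NP_fin by auto
  ultimately show ?thesis using finite_subset by blast
qed

definition Gset :: "nat \<Rightarrow> vec set" where
  "Gset n = {bvec M | M. set_mset M \<subseteq> {1..2 * n} \<and> count M 1 \<le> n}
            \<union> {bvec (replicate_mset j 1) | j. j \<ge> 1}"

lemma main_lemma:
  assumes n1: "n \<ge> 1"
  shows "0 \<notin># N \<Longrightarrow> bvec N \<in> Zhu_gen a n (Gset n)"
proof (induction N rule: wf_induct[OF wf_measures[of "[size, \<lambda>N. count N 1, sum_mset]"]])
  case (1 N)
  have IH: "bvec N' \<in> Zhu_gen a n (Gset n)"
    if "(N', N) \<in> measures [size, \<lambda>N. count N 1, sum_mset]" "0 \<notin># N'" for N'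
    using 1 that by blast
  have N0: "0 \<notin># N" using 1 by blast
  show ?case
  proof (cases "\<exists>j\<in>#N. j \<ge> 2 * n + 1")
    case True
    then obtain j where jN: "j \<in># N" and jb: "j \<ge> 2 * n + 1" by blast
    define M where "M = N - {#j#}"
    have NM: "N = add_mset j M" unfolding M_def using jN by simp
    define k where "k = j - 2 * n"
    have k1: "k \<ge> 1" and jk: "j = 2 * n + k" unfolding k_def using jb by auto
    have M0: "0 \<notin># M" using N0 NM by simp
    have j1: "j \<noteq> 1" using jb n1 by simp
    have uk: "bvec {#k#} \<in> Zhu_gen a n (Gset n)"
    proof (cases "k \<le> 2 * n")
      case True
      then have "bvec {#k#} \<in> Gset n" unfolding Gset_def using k1 n1 by auto
      then show ?thesis by (rule Zg_gen)
    next
      case False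
      have "({#k#}, N) \<in> measures [size, \<lambda>N. count N 1, sum_mset]"
        using False k1 jk NM j1 n1 by (cases "M = {#}") (auto simp: in_measures nonempty_has_size)
      then show ?thesis by (rule IH) (use k1 in simp)
    qed
    have uM: "bvec M \<in> Zhu_gen a n (Gset n)"
      by (rule IH) (use NM M0 in \<open>auto simp: in_measures\<close>)
    define X where "X = star_n n (bvec {#k#}) (bvec M)"
    have X: "X \<in> Zhu_gen a n (Gset n)" unfolding X_def by (rule Zg_star[OF uk uM])
    define B where "B = (\<lambda>r. add_mset r M) ` {2..<j}"
    show ?thesis
    proof (rule Zg_isolate[OF X, of B])
      show "finite B" unfolding B_def by simp
      show "N \<notin> B" unfolding B_def NM by auto
      show "X N \<noteq> 0" unfolding X_def NM jk by (rule case2_top[OF k1])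
      fix L
      show "X L \<noteq> 0 \<Longrightarrow> L = N \<or> L \<in> B"
      proof -
        assume XL: "X L \<noteq> 0"
        then obtain r where r: "1 \<le> r" "r \<le> 2 * n + k" "L = add_mset r M"
          using case2_supp unfolding X_def by blast
        have "r \<noteq> 1" using XL case2_one[OF k1 n1, of M] r(3) unfolding X_def by auto
        then show "L = N \<or> L \<in> B" using r unfolding B_def NM jk by auto
      qed
    next
      fix L assume "L \<in> B"
      then obtain r where r: "2 \<le> r" "r < j" "L = add_mset r M" unfolding B_def by auto
      show "bvec L \<in> Zhu_gen a n (Gset n)"
        by (rule IH) (use r NM j1 M0 in \<open>auto simp: in_measures\<close>)
    qed
  next
    case False
    then have small: "\<forall>j\<in>#N. j \<le> 2 * n" by auto
    show ?thesis
    proof (cases "count N 1 > n")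
      case True
      define c where "c = count N 1"
      define P where "P = {#x \<in># N. x \<noteq> 1#}"
      have NP: "N = P + replicate_mset c 1"
      proof -
        have r: "{#x \<in># N. \<not> x \<noteq> 1#} = replicate_mset (count N 1) 1"
          using filter_eq_replicate_mset[where D=N and x=1] by simp
        show ?thesis unfolding P_def c_def r[symmetric] by (rule multiset_partition)
      qed
      have P1: "count P 1 = 0" unfolding P_def by simp
      have P0: "0 \<notin># P" using N0 unfolding P_def by simp
      have cpos: "c \<ge> 1" "c > n" using True n1 unfolding c_def by linarith+
      have uP: "bvec P \<in> Zhu_gen a n (Gset n)"
        by (rule IH) (use NP cpos P0 in \<open>auto simp: in_measures\<close>)
      have uc: "bvec (replicate_mset c 1) \<in> Zhu_gen a n (Gset n)"
        by (rule Zg_gen) (use cpos in \<open>auto simp: Gset_def\<close>)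
      define X where "X = star_n n (bvec (replicate_mset c 1)) (bvec P)"
      have X: "X \<in> Zhu_gen a n (Gset n)" unfolding X_def by (rule Zg_star[OF uc uP])
      show ?thesis
      proof (rule Zg_isolate[OF X, of "vsupp X - {N}"])
        show "finite (vsupp X - {N})" unfolding X_def using case3_fin by blast
        show "N \<notin> vsupp X - {N}" by simp
        show "X N \<noteq> 0" unfolding X_def NP by (rule case3_top[OF cpos(2)])
        fix L
        show "X L \<noteq> 0 \<Longrightarrow> L = N \<or> L \<in> vsupp X - {N}" by (auto simp: vsupp_def)
      next
        fix L assume L: "L \<in> vsupp X - {N}"
        then have XL: "X L \<noteq> 0" and LN: "L \<noteq> N" by (auto simp: vsupp_def)
        obtain ms where ms: "length ms = c" "normal_prod ms (bvec P) L \<noteq> 0"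
          using case3_supp XL unfolding X_def by blast
        from NP_smaller[OF ms P1 P0] LN NP
        have sm: "0 \<notin># L" "size L < size N \<or> (size L = size N \<and> count L 1 < count N 1)" by auto
        show "bvec L \<in> Zhu_gen a n (Gset n)"
          by (rule IH) (use sm in \<open>auto simp: in_measures\<close>)
      qed
    next
      case False
      have "bvec N \<in> Gset n"
      proof -
        have "set_mset N \<subseteq> {1..2 * n}"
        proof
          fix x assume x: "x \<in># N"
          then have "x \<noteq> 0" using N0 by (metis)
          then show "x \<in> {1..2 * n}" using small x by auto
        qed
        then show ?thesis unfolding Gset_def using False by auto
      qed
      then show ?thesis by (rule Zg_gen)
    qed
  qed
qed

theorem theorem6p8:
  fixes a :: complex and n :: nat
  assumes "n \<ge> 1"
  shows "Mspace \<subseteq> Zhu_gen a n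
           ({bvec M | M. set_mset M \<subseteq> {1..2 * n} \<and> count M 1 \<le> n}
            \<union> {bvec (replicate_mset j 1) | j. j \<ge> 1})"
proof
  fix v assume v: "v \<in> Mspace"
  have eq: "v = (\<lambda>L. \<Sum>M\<in>vsupp v. vscale (v M) (bvec M) L)"
  proof
    fix L
    have fin: "finite (vsupp v)" using v unfolding Mspace_def by simp
    show "v L = (\<Sum>M\<in>vsupp v. vscale (v M) (bvec M) L)"
      using fin by (simp add: vscale_def bvec_def if_distrib[of "\<lambda>x. _ * x"] cong: if_cong)
        (simp add: vsupp_def)
  qed
  have "(\<lambda>L. \<Sum>M\<in>vsupp v. vscale (v M) (bvec M) L) \<in> Zhu_gen a n (Gset n)"
  proof (rule Zg_sum)
    fix M assume "M \<in> vsupp v"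
    then have "0 \<notin># M" using v unfolding Mspace_def by auto
    then show "vscale (v M) (bvec M) \<in> Zhu_gen a n (Gset n)"
      by (intro Zg_scale main_lemma assms)
  qed
  then show "v \<in> Zhu_gen a n
           ({bvec M | M. set_mset M \<subseteq> {1..2 * n} \<and> count M 1 \<le> n}
            \<union> {bvec (replicate_mset j 1) | j. j \<ge> 1})"
    using eq unfolding Gset_def by simp
qed

end
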